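(* For $n\in\mathbb Z_{\ge0}$ and $x,y\in\mathbb Z_{\ge0}$, let $p^{(1/2)}_n(x,y)$ be the probability that a simple symmetric random walk on $\mathbb Z$ started from $x$, reflected at $0$ (i.e. one considers $|S_n|$) and killed with probability $1/2$, independently, at each return to site $0$, is alive at time $n$ and located at $y$. Then $$p^{(1/2)}_n(x,y)=p_n(x-y)-p_n(x+y+2),$$ where $p_n(z)$ is the probability that a simple symmetric random walk on $\mathbb Z$ started at $0$ is at $z$ at time $n$. *)

theory Defs
  imports Complex_Main
begin

text \<open>Simple symmetric random walk on the integers over n steps: the sample space
  is the set of the 2^n equally likely step sequences with entries in {-1, 1}.\<close>

definition step_seqs :: "nat \<Rightarrow> int list set" where
  "step_seqs n = {xs. length xs = n \<and> set xs \<subseteq> {-1, 1}}"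

definition srw_pos :: "int \<Rightarrow> int list \<Rightarrow> nat \<Rightarrow> int" where
  "srw_pos x xs k = x + sum_list (take k xs)"

definition p_srw :: "nat \<Rightarrow> int \<Rightarrow> real" where
  "p_srw n z = real (card {xs \<in> step_seqs n. sum_list xs = z}) / 2 ^ n"

text \<open>p^(1/2)_n(x,y): the reflected walk |S_k| started at x, killed independently
  with probability 1/2 at each visit to 0 (at the times k < n, i.e. before each step
  out of 0), is alive at time n and located at y.  Given the path, the survival
  probability is (1/2)^(number of visits to 0 at times 0..n-1).\<close>
definition p_killed :: "nat \<Rightarrow> nat \<Rightarrow> nat \<Rightarrow> real" where
  "p_killed n x y =
     (\<Sum>xs\<in>step_seqs n.
        if \<bar>srw_pos (int x) xs n\<bar> = int y
        then (1/2) ^ card {k. k < n \<and> srw_pos (int x) xs k = 0}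
        else 0) / 2 ^ n"

end

theory Submission
  imports Defs
begin

lemma finite_step_seqs: "finite (step_seqs n)"
proof -
  have "step_seqs n = {xs. set xs \<subseteq> {-1,1} \<and> length xs = n}"
    unfolding step_seqs_def by auto
  thus ?thesis using finite_lists_length_eq[of "{-1::int,1}" n] by simp
qed

lemma step_seqs_0: "step_seqs 0 = {[]}"
  unfolding step_seqs_def by auto

lemma step_seqs_Suc:
  "step_seqs (Suc n) = Cons 1 ` step_seqs n \<union> Cons (-1) ` step_seqs n"
proof
  show "step_seqs (Suc n) \<subseteq> Cons 1 ` step_seqs n \<union> Cons (-1) ` step_seqs n"
  proof
    fix xs assume "xs \<in> step_seqs (Suc n)"
    then obtain s ys where xs: "xs = s # ys" "length ys = n" "set ys \<subseteq> {-1,1}" "s \<in> {-1,1}"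
      unfolding step_seqs_def by (cases xs) auto
    thus "xs \<in> Cons 1 ` step_seqs n \<union> Cons (-1) ` step_seqs n"
      unfolding step_seqs_def by auto
  qed
qed (auto simp: step_seqs_def)

lemma sum_step_seqs_Suc:
  "(\<Sum>xs\<in>step_seqs (Suc n). f xs) =
     (\<Sum>xs\<in>step_seqs n. f (1 # xs)) + (\<Sum>xs\<in>step_seqs n. f ((-1) # xs))"
proof -
  have "(\<Sum>xs\<in>step_seqs (Suc n). f xs) =
        (\<Sum>xs\<in>Cons 1 ` step_seqs n. f xs) + (\<Sum>xs\<in>Cons (-1) ` step_seqs n. f xs)"
    unfolding step_seqs_Suc
    by (rule sum.union_disjoint) (auto simp: finite_step_seqs)
  also have "\<dots> = (\<Sum>xs\<in>step_seqs n. f (1 # xs)) + (\<Sum>xs\<in>step_seqs n. f ((-1) # xs))"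
    by (simp add: sum.reindex)
  finally show ?thesis .
qed

lemma sum_step_seqs_neg:
  "(\<Sum>xs\<in>step_seqs n. f xs) = (\<Sum>xs\<in>step_seqs n. f (map uminus xs))"
proof -
  have inj: "inj_on (map uminus) (step_seqs n)"
    by (rule inj_on_inverseI[where g="map uminus"]) (simp add: comp_def)
  have im: "map uminus ` step_seqs n = step_seqs n"
  proof
    show "map uminus ` step_seqs n \<subseteq> step_seqs n" unfolding step_seqs_def by (auto, blast)
    show "step_seqs n \<subseteq> map uminus ` step_seqs n"
    proof
      fix xs assume h: "xs \<in> step_seqs n"
      have "xs = map uminus (map uminus xs)" by (simp add: comp_def)
      moreover have "map uminus xs \<in> step_seqs n" using h unfolding step_seqs_def by auto
      ultimately show "xs \<in> map uminus ` step_seqs n" by blast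
    qed
  qed
  have "(\<Sum>xs\<in>step_seqs n. f xs) = (\<Sum>xs\<in>map uminus ` step_seqs n. f xs)" using im by simp
  also have "\<dots> = (\<Sum>xs\<in>step_seqs n. f (map uminus xs))" by (simp add: sum.reindex[OF inj])
  finally show ?thesis .
qed

lemma sum_list_neg: "sum_list (map uminus xs) = - sum_list (xs::int list)"
  by (induction xs) auto

lemma srw_pos_neg: "srw_pos (-a) (map uminus xs) k = - srw_pos a xs k"
  unfolding srw_pos_def by (simp add: take_map sum_list_neg)

lemma srw_pos_neg0: "srw_pos (-a) (map uminus xs) k = 0 \<longleftrightarrow> srw_pos a xs k = 0"
  by (simp add: srw_pos_neg)

lemma srw_pos_Cons0: "srw_pos a (s # xs) 0 = a"
  unfolding srw_pos_def by simp

lemma srw_pos_Cons: "srw_pos a (s # xs) (Suc k) = srw_pos (a + s) xs k"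
  unfolding srw_pos_def by simp

lemma card_Suc_set:
  "card {k. k < Suc n \<and> P k} = (if P 0 then 1 else 0) + card {k. k < n \<and> P (Suc k)}"
proof -
  have e: "{k. k < Suc n \<and> P k} = (if P 0 then {0} else {}) \<union> Suc ` {k. k < n \<and> P (Suc k)}"
    by (auto simp: less_Suc_eq_0_disj)
  have "card (Suc ` {k. k < n \<and> P (Suc k)}) = card {k. k < n \<and> P (Suc k)}"
    by (simp add: card_image)
  moreover have "finite (Suc ` {k. k < n \<and> P (Suc k)})" by simp
  ultimately show ?thesis unfolding e by (auto simp: card_insert_if)
qed

definition W :: "nat \<Rightarrow> int \<Rightarrow> int \<Rightarrow> real" where
  "W n a y = (\<Sum>xs\<in>step_seqs n.
        if \<bar>srw_pos a xs n\<bar> = y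
        then (1/2) ^ card {k. k < n \<and> srw_pos a xs k = 0}
        else 0)"

definition C :: "nat \<Rightarrow> int \<Rightarrow> real" where
  "C n z = (\<Sum>xs\<in>step_seqs n. if sum_list xs = z then 1 else 0)"

lemma p_srw_C: "p_srw n z = C n z / 2 ^ n"
  unfolding p_srw_def C_def
  by (simp add: sum.If_cases finite_step_seqs Int_def conj_commute)

lemma p_killed_W: "p_killed n x y = W n (int x) (int y) / 2 ^ n"
  unfolding p_killed_def W_def by simp

lemma W_0: "W 0 a y = (if \<bar>a\<bar> = y then 1 else 0)"
  unfolding W_def step_seqs_0 srw_pos_def by simp

lemma C_0: "C 0 z = (if z = 0 then 1 else 0)"
  unfolding C_def step_seqs_0 by simp

lemma C_Suc: "C (Suc n) z = C n (z - 1) + C n (z + 1)"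
  unfolding C_def sum_step_seqs_Suc
  by (simp add: algebra_simps eq_diff_eq)

lemma C_neg: "C n (-z) = C n z"
  unfolding C_def by (subst sum_step_seqs_neg) (auto simp: sum_list_neg)

lemma W_neg: "W n (-a) y = W n a y"
  unfolding W_def by (subst sum_step_seqs_neg) (simp add: srw_pos_neg srw_pos_neg0 cong: if_cong)

lemma if_half: "(if P then c/2 else 0) = (if P then c else 0)/(2::real)"
  by simp

lemma W_term:
  "(if \<bar>srw_pos a (s # xs) (Suc n)\<bar> = y
     then (1/2::real) ^ card {k. k < Suc n \<and> srw_pos a (s # xs) k = 0} else 0)
   = (if a = 0 then 1/2 else 1) *
     (if \<bar>srw_pos (a + s) xs n\<bar> = y
      then (1/2) ^ card {k. k < n \<and> srw_pos (a + s) xs k = 0} else 0)"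
  by (simp add: srw_pos_Cons srw_pos_Cons0 card_Suc_set)

lemma W_Suc: "W (Suc n) a y = (if a = 0 then 1/2 else 1) * (W n (a+1) y + W n (a-1) y)"
proof -
  have "W (Suc n) a y = (if a = 0 then 1/2 else 1) * (W n (a+1) y + W n (a + -1) y)"
    unfolding W_def sum_step_seqs_Suc W_term by (simp only: sum_distrib_left distrib_left)
  thus ?thesis by simp
qed

lemma main:
  assumes "a \<ge> 0" "y \<ge> 0"
  shows "W n a y = C n (a - y) - C n (a + y + 2)"
  using assms(1)
proof (induction n arbitrary: a)
  case 0
  then show ?case using assms(2) by (simp add: W_0 C_0)
next
  case (Suc n)
  show ?case
  proof (cases "a = 0")
    case True
    have "W n (-1) y = W n 1 y" using W_neg[of n 1 y] by simp
    moreover have "C n (- y - 1) = C n (y + 1)" using C_neg[of n "y+1"] by simp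
    ultimately show ?thesis using True Suc.IH[of 1]
      by (simp add: W_Suc C_Suc algebra_simps)
  next
    case False
    then have "a - 1 \<ge> 0" using Suc.prems by simp
    then show ?thesis using False Suc.IH[of "a+1"] Suc.IH[of "a-1"] Suc.prems
      by (simp add: W_Suc C_Suc algebra_simps)
  qed
qed

theorem proposition3p1:
  fixes n x y :: nat
  shows "p_killed n x y = p_srw n (int x - int y) - p_srw n (int x + int y + 2)"
  unfolding p_killed_W p_srw_C
  by (simp add: main diff_divide_distrib)

end
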